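(* Let $X_1,X_2$ be independent integer random variables with $\mathbb P(X_1=0)=\frac{\sqrt2-1}{\sqrt2}$, $\mathbb P(X_1=1)=\frac1{\sqrt2}$, and $\mathbb P(X_2=-k)=\sqrt2(\sqrt2-1)^{k+1}$ for $k=0,1,2,\dots$, and let $X=X_1+X_2$. Then $\mathbb E(X)=0$, $\operatorname{Var}(X)=\sqrt2$, and for all $x,y\in\mathbb Z$ $$T(x,y)=(\sqrt2+1)^{2-y+x}\,\mathbb P(X=y-x).$$ Equivalently, for every $f\in\ell^1(\mathbb Z)$, $(Tf)(x)=(\sqrt2+1)^2\,\mathbb E\big((\sqrt2+1)^{-X}f(x+X)\big)$.
   Context: $T(x,y)=2$ if $y\le x$, $T(x,y)=1$ if $y=x+1$, $T(x,y)=0$ if $y>x+1$ ($x,y\in\mathbb Z$), and $(Tf)(x)=\sum_{y\in\mathbb Z}T(x,y)f(y)$. *)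

theory Defs
  imports "HOL-Probability.Probability"
begin

definition T :: "int \<Rightarrow> int \<Rightarrow> real" where
  "T x y = (if y \<le> x then 2 else if y = x + 1 then 1 else 0)"

definition T_op :: "(int \<Rightarrow> real) \<Rightarrow> int \<Rightarrow> real" where
  "T_op f x = (\<Sum>\<^sub>\<infinity>y. T x y * f y)"

end

theory Submission
  imports Defs
begin


lemma discrete_expectation:
  fixes M :: "'a measure" and Y :: "'a \<Rightarrow> int" and g :: "int \<Rightarrow> real"
  assumes P: "prob_space M" and Ym: "Y \<in> measurable M (count_space UNIV)"
    and S: "(\<lambda>n. norm (g n * measure M {\<omega>\<in>space M. Y \<omega> = n})) summable_on UNIV"
  shows "integrable M (\<lambda>\<omega>. g (Y \<omega>)) \<and>
     (\<integral>\<omega>. g (Y \<omega>) \<partial>M) = (\<Sum>\<^sub>\<infinity>n. g n * measure M {\<omega>\<in>space M. Y \<omega> = n})"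
proof -
  interpret prob_space M by (rule P)
  define p where "p n = measure M {\<omega>\<in>space M. Y \<omega> = n}" for n
  have pnn: "0 \<le> p n" for n unfolding p_def by simp
  have D: "distr M (count_space UNIV) Y = density (count_space UNIV) (\<lambda>n. ennreal (p n))"
  proof (rule measure_eqI_countable[where A=UNIV])
    fix a :: int
    have "emeasure (distr M (count_space UNIV) Y) {a} = emeasure M (Y -` {a} \<inter> space M)"
      using Ym by (simp add: emeasure_distr)
    also have "\<dots> = ennreal (p a)" unfolding p_def emeasure_eq_measure
      by (simp add: vimage_def Int_def conj_commute)
    also have "\<dots> = emeasure (density (count_space UNIV) (\<lambda>n. ennreal (p n))) {a}"
      by (simp add: emeasure_density nn_integral_count_space_finite)
    finally show "emeasure (distr M (count_space UNIV) Y) {a} = emeasure (density (count_space UNIV) (\<lambda>n. ennreal (p n))) {a}" .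
  qed auto
  have I1: "integrable M (\<lambda>\<omega>. g (Y \<omega>)) \<longleftrightarrow> integrable (count_space UNIV) (\<lambda>n. p n * g n)"
    using integrable_distr_eq[OF Ym, of g, symmetric] D
    by (simp add: integrable_density pnn)
  have I2: "(\<integral>\<omega>. g (Y \<omega>) \<partial>M) = (\<integral>n. p n * g n \<partial>count_space UNIV)"
    using integral_distr[OF Ym, of g, symmetric] D
    by (simp add: integral_density pnn)
  have ab: "Infinite_Set_Sum.abs_summable_on (\<lambda>n. g n * p n) UNIV"
    using S abs_summable_equivalent unfolding p_def by blast
  hence int: "integrable (count_space UNIV) (\<lambda>n. p n * g n)"
    unfolding abs_summable_on_def by (simp add: mult.commute)
  have "(\<integral>n. p n * g n \<partial>count_space UNIV) = infsetsum (\<lambda>n. g n * p n) UNIV"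
    unfolding infsetsum_def by (simp add: mult.commute)
  also have "\<dots> = (\<Sum>\<^sub>\<infinity>n. g n * p n)" using infsetsum_infsum[OF ab] .
  finally show ?thesis using I1 I2 int unfolding p_def by simp
qed


lemma aux_w: "(w::real) \<noteq> 0 \<Longrightarrow> - (inverse (w^2) * (of_nat 2 * w^1 * (- 1)) * inverse (w^2)) = 2 / w^3"
  by (simp add: field_simps power2_eq_square power3_eq_cube)

lemma geom2_sums:
  fixes z :: real assumes "norm z < 1"
  shows "(\<lambda>n. of_nat (Suc n) * of_nat (Suc (Suc n)) * z ^ n) sums (2 / (1 - z)^3)"
proof -
  have "(\<lambda>n. diffs (\<lambda>n. of_nat (Suc n)) n * z^n) sums (2 / (1 - z)^3)"
  proof (rule termdiffs_sums_strong[where K=1])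
    fix z :: real assume "norm z < 1"
    thus "(\<lambda>n. of_nat (Suc n) * z^n) sums (1 / (1 - z)^2)" by (rule geometric_deriv_sums)
  next
    have nz: "1 - z \<noteq> 0" using assms by auto
    have "((\<lambda>z. inverse ((1 - z)^2)) has_field_derivative
        - (inverse ((1 - z)^2) * (of_nat 2 * (1 - z)^1 * (- 1)) * inverse ((1 - z)^2))) (at z)"
      using nz by (intro DERIV_inverse' derivative_eq_intros) auto
    moreover have "- (inverse ((1 - z)^2) * (of_nat 2 * (1 - z)^1 * (- 1)) * inverse ((1 - z)^2)) = 2 / (1 - z)^3"
      using aux_w[OF nz] .
    ultimately show "((\<lambda>z. 1 / (1 - z)^2) has_field_derivative 2 / (1 - z)^3) (at z)"
      by (simp add: divide_inverse)
  qed (use assms in auto)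
  thus ?thesis unfolding diffs_def by (simp add: mult.assoc)
qed

lemma int_has_sum:
  fixes h :: "int \<Rightarrow> real"
  assumes z: "\<And>n. n \<ge> 2 \<Longrightarrow> h n = 0"
    and s: "(\<lambda>k. h (- int k)) sums s" and ns: "summable (\<lambda>k. norm (h (- int k)))"
  shows "(h has_sum (h 1 + s)) UNIV"
proof -
  have inj: "inj (\<lambda>k::nat. - int k)" by (auto simp: inj_def)
  have "((h \<circ> (\<lambda>k. - int k)) has_sum s) UNIV"
    using norm_summable_imp_has_sum[OF _ s] ns by (simp add: o_def)
  hence A: "(h has_sum s) (range (\<lambda>k::nat. - int k))"
    using has_sum_reindex[OF inj] by blast
  have B: "(h has_sum h 1) {1}" using has_sum_finite[of "{1}" h] by simp
  have R: "range (\<lambda>k::nat. - int k) = {..0}"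
  proof (auto)
    fix x :: int assume "x \<le> 0" thus "x \<in> range (\<lambda>k::nat. - int k)"
      by (intro image_eqI[where x="nat (-x)"]) auto
  qed
  have "(h has_sum (h 1 + s)) ({1} \<union> range (\<lambda>k::nat. - int k))"
    by (rule has_sum_Un_disjoint[OF B A]) (auto simp: R)
  then show ?thesis
    by (rule has_sum_cong_neutral[THEN iffD1, rotated -1]) (auto simp: R z)
qed


lemma test:
  fixes M :: "'a measure" and X1 X2 :: "'a \<Rightarrow> int"
  assumes "prob_space M"
    and m1: "X1 \<in> measurable M (count_space UNIV)"
    and m2: "X2 \<in> measurable M (count_space UNIV)"
  shows "(\<lambda>\<omega>. X1 \<omega> + X2 \<omega>) \<in> measurable M (count_space UNIV)"
    "\<And>P. {\<omega> \<in> space M. P (X1 \<omega>) (X2 \<omega>)} \<in> sets M"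
proof -
  have mp: "(\<lambda>\<omega>. (X1 \<omega>, X2 \<omega>)) \<in> measurable M (count_space UNIV)"
    using measurable_Pair[OF m1 m2] pair_measure_countable[of "UNIV::int set" "UNIV::int set"]
    by simp
  show "(\<lambda>\<omega>. X1 \<omega> + X2 \<omega>) \<in> measurable M (count_space UNIV)"
    using measurable_compose[OF mp, of "\<lambda>(u,v). u + v" "count_space UNIV"] by simp
  fix P
  have "{\<omega> \<in> space M. P (X1 \<omega>) (X2 \<omega>)} = (\<lambda>\<omega>. (X1 \<omega>, X2 \<omega>)) -` {(u,v). P u v} \<inter> space M" by auto
  then show "{\<omega> \<in> space M. P (X1 \<omega>) (X2 \<omega>)} \<in> sets M"
    using measurable_sets[OF mp, of "{(u,v). P u v}"] by simp
qed


lemma sqrt2_facts: "sqrt 2 * sqrt 2 = (2::real)" "sqrt (2::real) > 1" "(sqrt 2 + 1) * (sqrt 2 - 1) = (1::real)"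
  "1 - (sqrt 2 - 1) = sqrt 2 * (sqrt 2 - 1::real)" "sqrt (2::real) - 1 < 1" "sqrt (2::real) - 1 > 0"
proof -
  show a: "sqrt 2 * sqrt 2 = (2::real)" by simp
  show b: "sqrt (2::real) > 1" by simp
  have "sqrt (2::real) < sqrt 4" by (simp only: real_sqrt_less_iff)
  then have "sqrt (2::real) < 2" by (simp add: real_sqrt_four)
  then show "sqrt (2::real) - 1 < 1" by simp
  show "sqrt (2::real) - 1 > 0" using b by simp
  show "(sqrt 2 + 1) * (sqrt 2 - 1) = (1::real)" using a by (simp add: algebra_simps)
  show "1 - (sqrt 2 - 1) = sqrt 2 * (sqrt 2 - 1::real)" using a by (simp add: algebra_simps)
qed

lemma distX:
  fixes M :: "'a measure" and X1 X2 :: "'a \<Rightarrow> int"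
  assumes P: "prob_space M"
    and m1: "X1 \<in> measurable M (count_space UNIV)"
    and m2: "X2 \<in> measurable M (count_space UNIV)"
    and ind: "prob_space.indep_var M (count_space UNIV) X1 (count_space UNIV) X2"
    and h0: "measure M {\<omega> \<in> space M. X1 \<omega> = 0} = (sqrt 2 - 1) / sqrt 2"
    and h1: "measure M {\<omega> \<in> space M. X1 \<omega> = 1} = 1 / sqrt 2"
    and h2: "\<forall>k::nat. measure M {\<omega> \<in> space M. X2 \<omega> = - int k} = sqrt 2 * (sqrt 2 - 1) ^ (k + 1)"
  shows "measure M {\<omega> \<in> space M. X1 \<omega> + X2 \<omega> = n} =
     (if n \<ge> 2 then 0 else if n = 1 then sqrt 2 - 1 else 2 * (sqrt 2 - 1) ^ (nat (-n) + 2))"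
proof -
  interpret prob_space M by (rule P)
  define a where "a = sqrt 2 - (1::real)"
  have s2: "sqrt 2 * sqrt 2 = (2::real)" by simp
  have apos: "0 < a" "a < 1" using sqrt2_facts unfolding a_def by auto
  have oma: "1 - a = sqrt 2 * a" using sqrt2_facts unfolding a_def by auto
  have ev: "\<And>P. {\<omega> \<in> space M. P (X1 \<omega>) (X2 \<omega>)} \<in> events"
    using test(2)[OF P m1 m2] .
  have ev1: "\<And>P. {\<omega> \<in> space M. P (X1 \<omega>)} \<in> events"
    using ev[of "\<lambda>u v. _ u"] .
  have ev2: "\<And>P. {\<omega> \<in> space M. P (X2 \<omega>)} \<in> events"
    using ev[of "\<lambda>u v. _ v"] .
  have "prob {\<omega> \<in> space M. X1 \<omega> = 0 \<or> X1 \<omega> = 1} =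
        prob ({\<omega> \<in> space M. X1 \<omega> = 0} \<union> {\<omega> \<in> space M. X1 \<omega> = 1})"
    by (rule arg_cong[where f=prob]) auto
  also have "\<dots> = prob {\<omega> \<in> space M. X1 \<omega> = 0} + prob {\<omega> \<in> space M. X1 \<omega> = 1}"
    by (rule finite_measure_Union[OF ev1 ev1]) auto
  also have "\<dots> = 1" unfolding h0 h1 by (simp add: field_simps)
  finally have "AE \<omega> in M. \<omega> \<in> {\<omega> \<in> space M. X1 \<omega> = 0 \<or> X1 \<omega> = 1}"
    using AE_in_set_eq_1[OF ev1[of "\<lambda>x. x = 0 \<or> x = 1"]] by blast
  then have AE1: "AE \<omega> in M. X1 \<omega> = 0 \<or> X1 \<omega> = 1" by eventually_elim auto
  have F1: "(\<lambda>k. prob {\<omega> \<in> space M. X2 \<omega> = - int k}) sums prob (\<Union>k. {\<omega> \<in> space M. X2 \<omega> = - int k})"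
    by (rule finite_measure_UNION) (auto simp: disjoint_family_on_def ev2[of "\<lambda>x. x = - int i" for i])
  have F2: "(\<Union>k. {\<omega> \<in> space M. X2 \<omega> = - int k}) = {\<omega> \<in> space M. X2 \<omega> \<le> 0}"
  proof auto
    fix \<omega> assume "\<omega> \<in> space M" "X2 \<omega> \<le> 0"
    then show "\<exists>k. X2 \<omega> = - int k" by (intro exI[of _ "nat (- X2 \<omega>)"]) auto
  qed
  have F3: "(\<lambda>k. prob {\<omega> \<in> space M. X2 \<omega> = - int k}) sums 1"
  proof -
    have "(\<lambda>k. (sqrt 2 * a) * a ^ k) sums ((sqrt 2 * a) * (1 / (1 - a)))"
      using geometric_sums[of a] apos by (intro sums_mult) auto
    also have "(sqrt 2 * a) * (1 / (1 - a)) = 1" using oma apos by simp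
    finally have "(\<lambda>k. (sqrt 2 * a) * a ^ k) sums 1" .
    moreover have "(\<lambda>k. prob {\<omega> \<in> space M. X2 \<omega> = - int k}) = (\<lambda>k. (sqrt 2 * a) * a ^ k)"
    proof (rule ext)
      fix k
      have "(sqrt 2 - 1) ^ (k + 1) = a * a ^ k" unfolding a_def by (rule power_Suc[of _ k, unfolded Suc_eq_plus1])
      then show "prob {\<omega> \<in> space M. X2 \<omega> = - int k} = (sqrt 2 * a) * a ^ k"
        using h2[rule_format, of k] by (simp only: mult.assoc)
    qed
    ultimately show ?thesis by (simp only:)
  qed
  have "prob {\<omega> \<in> space M. X2 \<omega> \<le> 0} = 1" using sums_unique2[OF F1 F3] F2 by simp
  then have "AE \<omega> in M. \<omega> \<in> {\<omega> \<in> space M. X2 \<omega> \<le> 0}"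
    using AE_in_set_eq_1[OF ev2[of "\<lambda>x. x \<le> 0"]] by blast
  then have AE2: "AE \<omega> in M. X2 \<omega> \<le> 0" by eventually_elim auto
  have q2pos: "prob {\<omega> \<in> space M. X2 \<omega> = m} = 0" if "m > 0" for m
  proof -
    have "prob {\<omega> \<in> space M. X2 \<omega> = m} = prob {}"
      by (rule measure_eq_AE) (use AE2 that ev2 in auto)
    then show ?thesis by simp
  qed
  have q2neg: "prob {\<omega> \<in> space M. X2 \<omega> = m} = sqrt 2 * a ^ (nat (-m) + 1)" if "m \<le> 0" for m
    using h2[rule_format, of "nat (-m)"] that unfolding a_def by simp
  have indep: "prob {\<omega> \<in> space M. X1 \<omega> = i \<and> X2 \<omega> = j} =
       prob {\<omega> \<in> space M. X1 \<omega> = i} * prob {\<omega> \<in> space M. X2 \<omega> = j}" for i j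
  proof -
    have "prob ((\<lambda>x. (X1 x, X2 x)) -` ({i} \<times> {j}) \<inter> space M) =
      prob (X1 -` {i} \<inter> space M) * prob (X2 -` {j} \<inter> space M)"
      by (rule indep_varD[OF ind]) auto
    moreover have "(\<lambda>x. (X1 x, X2 x)) -` ({i} \<times> {j}) \<inter> space M = {\<omega> \<in> space M. X1 \<omega> = i \<and> X2 \<omega> = j}" by auto
    moreover have "X1 -` {i} \<inter> space M = {\<omega> \<in> space M. X1 \<omega> = i}" by auto
    moreover have "X2 -` {j} \<inter> space M = {\<omega> \<in> space M. X2 \<omega> = j}" by auto
    ultimately show ?thesis by simp
  qed
  have "prob {\<omega> \<in> space M. X1 \<omega> + X2 \<omega> = n} =
     prob ({\<omega> \<in> space M. X1 \<omega> = 0 \<and> X2 \<omega> = n} \<union> {\<omega> \<in> space M. X1 \<omega> = 1 \<and> X2 \<omega> = n - 1})"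
    by (rule measure_eq_AE) (use AE1 ev in \<open>auto\<close>)
  also have "\<dots> = prob {\<omega> \<in> space M. X1 \<omega> = 0 \<and> X2 \<omega> = n} + prob {\<omega> \<in> space M. X1 \<omega> = 1 \<and> X2 \<omega> = n - 1}"
    by (rule finite_measure_Union[OF ev ev]) auto
  also have "\<dots> = a / sqrt 2 * prob {\<omega> \<in> space M. X2 \<omega> = n} + 1 / sqrt 2 * prob {\<omega> \<in> space M. X2 \<omega> = n - 1}"
    unfolding indep h0 h1 a_def ..
  also have "\<dots> = (if n \<ge> 2 then 0 else if n = 1 then a else 2 * a ^ (nat (-n) + 2))"
  proof -
    consider "n \<ge> 2" | "n = 1" | "n \<le> 0" by linarith
    then show ?thesis
    proof cases
      case 1 then show ?thesis using q2pos[of n] q2pos[of "n-1"] by simp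
    next
      case 2 then show ?thesis using q2pos[of n] q2neg[of "n-1"] by simp
    next
      case 3
      then have e: "nat (- (n - 1)) + 1 = nat (-n) + 2" by simp
      show ?thesis using 3 q2neg[of n] q2neg[of "n-1"] e
        by (simp add: field_simps power_add)
    qed
  qed
  finally show ?thesis unfolding a_def .
qed


lemma aux1: "(b::real) \<noteq> 0 \<Longrightarrow> 1/b^2 - 1/b = (1-b)/b^2"
  by (simp add: field_simps power2_eq_square)
lemma aux2: "(b::real) \<noteq> 0 \<Longrightarrow> 2/b^3 - 3*(1/b^2) + 1/b = (1-b)*(1+(1-b))/b^3"
  by (simp add: field_simps power2_eq_square power3_eq_cube)

lemma series_facts:
  fixes a :: real assumes "0 \<le> a" "a < 1"
  shows "(\<lambda>k. real k * a ^ k) sums (a / (1 - a)^2)"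
    "(\<lambda>k. (real k)^2 * a ^ k) sums (a * (1 + a) / (1 - a)^3)"
proof -
  have n: "norm a < 1" using assms by simp
  have nz: "1 - a \<noteq> 0" using assms by simp
  have G0: "(\<lambda>k. a ^ k) sums (1 / (1 - a))" using geometric_sums[OF n] by simp
  have G1: "(\<lambda>k. of_nat (Suc k) * a ^ k) sums (1 / (1 - a)^2)" using geometric_deriv_sums[OF n] .
  have G2: "(\<lambda>k. of_nat (Suc k) * of_nat (Suc (Suc k)) * a ^ k) sums (2 / (1 - a)^3)" using geom2_sums[OF n] .
  have "(\<lambda>k. of_nat (Suc k) * a ^ k - a ^ k) sums (1 / (1 - a)^2 - 1 / (1 - a))"
    by (rule sums_diff[OF G1 G0])
  moreover have "(\<lambda>k. of_nat (Suc k) * a ^ k - a ^ k) = (\<lambda>k. real k * a ^ k)"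
    by (simp add: fun_eq_iff algebra_simps)
  moreover have "1 / (1 - a)^2 - 1 / (1 - a) = a / (1 - a)^2"
    using aux1[OF nz] by simp
  ultimately show "(\<lambda>k. real k * a ^ k) sums (a / (1 - a)^2)" by simp
  have "(\<lambda>k. of_nat (Suc k) * of_nat (Suc (Suc k)) * a ^ k - 3 * (of_nat (Suc k) * a ^ k) + a ^ k)
     sums (2 / (1 - a)^3 - 3 * (1 / (1 - a)^2) + 1 / (1 - a))"
    by (intro sums_add sums_diff sums_mult G0 G1 G2)
  moreover have "(\<lambda>k. of_nat (Suc k) * of_nat (Suc (Suc k)) * a ^ k - 3 * (of_nat (Suc k) * a ^ k) + a ^ k)
      = (\<lambda>k. (real k)^2 * a ^ k)"
    by (simp add: fun_eq_iff algebra_simps power2_eq_square)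
  moreover have "2 / (1 - a)^3 - 3 * (1 / (1 - a)^2) + 1 / (1 - a) = a * (1 + a) / (1 - a)^3"
    using aux2[OF nz] by simp
  ultimately show "(\<lambda>k. (real k)^2 * a ^ k) sums (a * (1 + a) / (1 - a)^3)" by simp
qed

lemma int_sum_facts:
  fixes h :: "int \<Rightarrow> real"
  assumes z: "\<And>n. n \<ge> 2 \<Longrightarrow> h n = 0"
    and s: "(\<lambda>k. h (- int k)) sums s" and ns: "summable (\<lambda>k. norm (h (- int k)))"
  shows "(\<lambda>n. norm (h n)) summable_on UNIV" "infsum h UNIV = h 1 + s"
proof -
  show "infsum h UNIV = h 1 + s" using int_has_sum[OF z s ns] by (rule infsumI)
  have "((\<lambda>n. norm (h n)) has_sum (norm (h 1) + suminf (\<lambda>k. norm (h (- int k))))) UNIV"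
    by (rule int_has_sum) (use z ns in \<open>auto intro: summable_sums\<close>)
  then show "(\<lambda>n. norm (h n)) summable_on UNIV" by (rule has_sum_imp_summable)
qed


theorem proposition2p1:
  fixes M :: "'a measure" and X1 X2 :: "'a \<Rightarrow> int"
  assumes "prob_space M"
    and "X1 \<in> measurable M (count_space UNIV)"
    and "X2 \<in> measurable M (count_space UNIV)"
    and "prob_space.indep_var M (count_space UNIV) X1 (count_space UNIV) X2"
    and "measure M {\<omega> \<in> space M. X1 \<omega> = 0} = (sqrt 2 - 1) / sqrt 2"
    and "measure M {\<omega> \<in> space M. X1 \<omega> = 1} = 1 / sqrt 2"
    and "\<forall>k::nat. measure M {\<omega> \<in> space M. X2 \<omega> = - int k} = sqrt 2 * (sqrt 2 - 1) ^ (k + 1)"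
  shows "integrable M (\<lambda>\<omega>. real_of_int (X1 \<omega> + X2 \<omega>))
    \<and> (\<integral>\<omega>. real_of_int (X1 \<omega> + X2 \<omega>) \<partial>M) = 0
    \<and> integrable M (\<lambda>\<omega>. (real_of_int (X1 \<omega> + X2 \<omega>))\<^sup>2)
    \<and> (\<integral>\<omega>. (real_of_int (X1 \<omega> + X2 \<omega>) - (\<integral>\<omega>'. real_of_int (X1 \<omega>' + X2 \<omega>') \<partial>M))\<^sup>2 \<partial>M) = sqrt 2
    \<and> (\<forall>x y. T x y = (sqrt 2 + 1) powi (2 - y + x) * measure M {\<omega> \<in> space M. X1 \<omega> + X2 \<omega> = y - x})
    \<and> (\<forall>f :: int \<Rightarrow> real. (\<lambda>y. norm (f y)) summable_on UNIV \<longrightarrow>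
         (\<forall>x. T_op f x = (sqrt 2 + 1)\<^sup>2 *
            (\<integral>\<omega>. (sqrt 2 + 1) powi (- (X1 \<omega> + X2 \<omega>)) * f (x + (X1 \<omega> + X2 \<omega>)) \<partial>M)))"
proof -
  define s where "s = sqrt (2::real)"
  define a where "a = s - 1"
  have ss: "s * s = 2" and s1: "s > 1" and apos: "0 < a" "a < 1" and sa: "(s + 1) * a = 1"
    and oma: "1 - a = s * a"
    using sqrt2_facts unfolding a_def s_def by auto
  define pv where "pv n = (if n \<ge> 2 then 0 else if n = 1 then a else 2 * a ^ (nat (-n) + 2))" for n :: int
  have PX: "\<And>n. measure M {\<omega> \<in> space M. X1 \<omega> + X2 \<omega> = n} = pv n"
    using distX[OF assms] unfolding pv_def a_def s_def by simp
  have pvneg: "pv (- int k) = 2 * a^2 * a^k" for k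
    by (simp add: pv_def power_add mult.commute power2_eq_square)
  have pv1: "pv 1 = a" by (simp add: pv_def)
  have pvz: "\<And>n. n \<ge> 2 \<Longrightarrow> pv n = 0" by (simp add: pv_def)
  have Ym: "(\<lambda>\<omega>. X1 \<omega> + X2 \<omega>) \<in> measurable M (count_space UNIV)"
    using test(1)[OF assms(1-3)] .
  note DE = discrete_expectation[OF assms(1) Ym, unfolded PX]
  have sq: "(1 - a)^2 = 2 * a^2"
  proof -
    have "(1 - a)^2 = (s * s) * a^2" unfolding oma by (simp add: power2_eq_square)
    then show ?thesis using ss by simp
  qed
  have cube: "(1 - a)^3 = 2 * s * a^3"
  proof -
    have "(1 - a)^3 = (s * s) * s * a^3" unfolding oma by (simp add: power3_eq_cube)
    then show ?thesis using ss by simp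
  qed
  have a1: "1 + a = s" unfolding a_def by simp
  define h1 where "h1 n = real_of_int n * pv n" for n
  have h1neg: "h1 (- int k) = (- 2 * a^2) * (real k * a^k)" for k
    by (simp add: h1_def pvneg)
  have h1s: "(\<lambda>k. h1 (- int k)) sums ((- 2 * a^2) * (a / (1 - a)^2))"
    unfolding h1neg by (intro sums_mult series_facts(1)) (use apos in auto)
  have h1ns: "summable (\<lambda>k. norm (h1 (- int k)))"
  proof -
    have "(\<lambda>k. (2 * a^2) * (real k * a^k)) sums ((2 * a^2) * (a / (1 - a)^2))"
      by (intro sums_mult series_facts(1)) (use apos in auto)
    moreover have "(\<lambda>k. norm (h1 (- int k))) = (\<lambda>k. (2 * a^2) * (real k * a^k))"
      using apos by (simp add: fun_eq_iff h1neg abs_mult)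
    ultimately show ?thesis by (metis sums_summable)
  qed
  have h11: "h1 1 = a" by (simp add: h1_def pv1)
  have h1z: "n \<ge> 2 \<Longrightarrow> h1 n = 0" for n by (simp add: h1_def pvz)
  have M1: "integrable M (\<lambda>\<omega>. real_of_int (X1 \<omega> + X2 \<omega>))
      \<and> (\<integral>\<omega>. real_of_int (X1 \<omega> + X2 \<omega>) \<partial>M) = 0"
  proof -
    have "(- 2 * a^2) * (a / (1 - a)^2) = - a" unfolding sq using apos by simp
    then have "infsum h1 UNIV = 0" using int_sum_facts(2)[OF h1z h1s h1ns] by (simp add: h11)
    moreover have "(\<lambda>n. norm (h1 n)) summable_on UNIV" using int_sum_facts(1)[OF h1z h1s h1ns] .
    ultimately show ?thesis using DE[of real_of_int] unfolding h1_def by simp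
  qed
  define h2 where "h2 n = (real_of_int n)^2 * pv n" for n
  have h2neg: "h2 (- int k) = (2 * a^2) * ((real k)^2 * a^k)" for k
    by (simp add: h2_def pvneg)
  have h2s: "(\<lambda>k. h2 (- int k)) sums ((2 * a^2) * (a * (1 + a) / (1 - a)^3))"
    unfolding h2neg by (intro sums_mult series_facts(2)) (use apos in auto)
  have h2ns: "summable (\<lambda>k. norm (h2 (- int k)))"
  proof -
    have "(\<lambda>k. norm (h2 (- int k))) = (\<lambda>k. h2 (- int k))"
      using apos by (simp add: fun_eq_iff h2neg abs_mult)
    then show ?thesis using h2s by (metis sums_summable)
  qed
  have h21: "h2 1 = a" by (simp add: h2_def pv1)
  have h2z: "n \<ge> 2 \<Longrightarrow> h2 n = 0" for n by (simp add: h2_def pvz)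
  have M2: "integrable M (\<lambda>\<omega>. (real_of_int (X1 \<omega> + X2 \<omega>))\<^sup>2)
      \<and> (\<integral>\<omega>. (real_of_int (X1 \<omega> + X2 \<omega>))\<^sup>2 \<partial>M) = s"
  proof -
    have X: "(2 * a^2) * (a * (1 + a) / (1 - a)^3) = 1" unfolding cube a1 using apos s1
      by (simp add: field_simps power2_eq_square power3_eq_cube)
    have "infsum h2 UNIV = h2 1 + (2 * a^2) * (a * (1 + a) / (1 - a)^3)"
      by (rule int_sum_facts(2)[OF h2z h2s h2ns])
    also have "\<dots> = 1 + a" unfolding h21 X by simp
    finally have "infsum h2 UNIV = s" using a1 by simp
    moreover have "(\<lambda>n. norm (h2 n)) summable_on UNIV" using int_sum_facts(1)[OF h2z h2s h2ns] .
    ultimately show ?thesis using DE[of "\<lambda>n. (real_of_int n)^2"] unfolding h2_def by simp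
  qed
  have Tv: "T x y = (s + 1) powi (2 - y + x) * pv (y - x)" for x y
  proof -
    consider "y - x \<ge> 2" | "y - x = 1" | "y - x \<le> 0" by linarith
    then show ?thesis
    proof cases
      case 1 then show ?thesis by (simp add: T_def pvz)
    next
      case 2
      then have e: "2 - y + x = 1" and e2: "y = x + 1" by auto
      have "T x y = 1" unfolding e2 by (simp add: T_def)
      then show ?thesis unfolding e 2 using sa by (simp add: pv1)
    next
      case 3
      then obtain k where k: "y - x = - int k" by (metis add.inverse_inverse neg_0_le_iff_le nonneg_int_cases)
      then have e: "2 - y + x = int (k + 2)" by simp
      have "(s + 1) ^ (k + 2) * a ^ (k + 2) = ((s + 1) * a) ^ (k + 2)"
        by (rule power_mult_distrib[symmetric])
      then have "(s + 1) ^ (k + 2) * a ^ (k + 2) = 1" using sa by simp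
      moreover have "2 * a^2 * a^k = 2 * a ^ (k + 2)" by (simp add: power_add power2_eq_square)
      ultimately have Q: "(s + 1) ^ (k + 2) * (2 * a^2 * a^k) = 2"
        by (metis mult.left_commute mult.right_neutral)
      have Txy: "T x y = 2" using 3 by (simp add: T_def)
      have pw: "(s + 1) powi (2 - y + x) = (s + 1) ^ (k + 2)" unfolding e by (rule power_int_of_nat)
      show ?thesis unfolding Txy pw k pvneg using Q[symmetric] .
    qed
  qed
  have PT: "\<forall>x y. T x y = (s + 1) powi (2 - y + x) * measure M {\<omega> \<in> space M. X1 \<omega> + X2 \<omega> = y - x}"
    unfolding PX using Tv by blast
  have OP: "T_op f x = (s + 1)\<^sup>2 *
            (\<integral>\<omega>. (s + 1) powi (- (X1 \<omega> + X2 \<omega>)) * f (x + (X1 \<omega> + X2 \<omega>)) \<partial>M)"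
    if fs: "(\<lambda>y. norm (f y)) summable_on UNIV" for f :: "int \<Rightarrow> real" and x
  proof -
    define c where "c = (s + 1)^2"
    have cpos: "c > 0" unfolding c_def using s1 by simp
    have key: "(s + 1) powi (- n) * f (x + n) * pv n = T x (x + n) * f (x + n) / c" for n
    proof -
      have "T x (x + n) = (s + 1) powi (2 + (- n)) * pv n" using Tv[of x "x + n"] by simp
      also have "(s + 1) powi (2 + (- n)) = c * (s + 1) powi (- n)"
        using s1 by (subst power_int_add) (auto simp: c_def)
      finally show ?thesis using cpos by (simp add: field_simps)
    qed
    have bij: "bij_betw (\<lambda>n. x + n) UNIV UNIV"
      by (rule bij_betwI[where g="\<lambda>n. n - x"]) auto
    have fsh: "(\<lambda>n. norm (f (x + n))) summable_on UNIV"
      using summable_on_reindex_bij_betw[OF bij, of "\<lambda>y. norm (f y)"] fs by simp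
    have Tb: "\<bar>T u v\<bar> \<le> 2" for u v by (simp add: T_def)
    have sm: "(\<lambda>n. norm ((s + 1) powi (- n) * f (x + n) * pv n)) summable_on UNIV"
    proof (rule summable_on_comparison_test)
      show "(\<lambda>n. (2 / c) * norm (f (x + n))) summable_on UNIV"
        by (rule summable_on_cmult_right[OF fsh])
      fix n
      have "norm (T x (x + n) * f (x + n) / c) \<le> (2 / c) * norm (f (x + n))"
        using Tb[of x "x + n"] cpos
        by (simp add: abs_mult divide_simps mult_right_mono)
      then show "norm ((s + 1) powi (- n) * f (x + n) * pv n) \<le> (2 / c) * norm (f (x + n))"
        unfolding key .
    qed simp
    have "(\<integral>\<omega>. (s + 1) powi (- (X1 \<omega> + X2 \<omega>)) * f (x + (X1 \<omega> + X2 \<omega>)) \<partial>M)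
        = (\<Sum>\<^sub>\<infinity>n. (s + 1) powi (- n) * f (x + n) * pv n)"
      using DE[of "\<lambda>n. (s + 1) powi (- n) * f (x + n)"] sm by simp
    also have "\<dots> = (\<Sum>\<^sub>\<infinity>n. (1 / c) * (T x (x + n) * f (x + n)))"
      unfolding key by simp
    also have "\<dots> = (1 / c) * (\<Sum>\<^sub>\<infinity>n. T x (x + n) * f (x + n))"
      by (rule infsum_cmult_right')
    also have "(\<Sum>\<^sub>\<infinity>n. T x (x + n) * f (x + n)) = T_op f x"
      unfolding T_op_def by (rule infsum_reindex_bij_betw[OF bij])
    finally show ?thesis using cpos unfolding c_def by simp
  qed
  show ?thesis
    unfolding s_def[symmetric]
    using M1 M2 PT OP by simp
qed

end
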